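(* Let $m\ge1$, $\tilde{\mathbf{x}}\in\mathbb{R}^m$, $\hat{\mathbf{b}}\in\Delta_m:=\{\mathbf{b}\in\mathbb{R}^m:\mathbf{b}\ge\mathbf{0},\ \mathbf{b}^\top\mathbf{1}=1\}$, $\lambda>0$, $0\le\gamma<1$, $\kappa\ge 0$, and let $\boldsymbol{\Sigma}\in\mathbb{R}^{m\times m}$ be symmetric positive definite with Cholesky factorization $\boldsymbol{\Sigma}=\mathbf{U}^\top\mathbf{U}$ ($\mathbf{U}$ upper triangular). Let $\sigma=\sqrt{\sum_{i=1}^m\sigma_i^2}$ where $\sigma_i^2$ are the diagonal entries of $\boldsymbol{\Sigma}$, and assume $\max_i \tilde{x}_i>\kappa\sigma+\lambda$. Define the ellipsoid $\mathcal{U}=\{\mathbf{x}\in\mathbb{R}^m:(\mathbf{x}-\tilde{\mathbf{x}})^\top\boldsymbol{\Sigma}^{-1}(\mathbf{x}-\tilde{\mathbf{x}})\le\kappa^2\}$ and the robust problem $$\text{(R)}\qquad \max_{w\ge0,\ \mathbf{b}\ge\mathbf{0}}\ \min_{\mathbf{x}\in\mathcal{U}}\{w\,\mathbf{b}^\top\mathbf{x}\}-\lambda\|\hat{\mathbf{b}}-w\mathbf{b}\|_1\quad\text{s.t.}\quad w+\gamma\|\hat{\mathbf{b}}-w\mathbf{b}\|_1=1,\ \ \mathbf{b}^\top\mathbf{1}=1,$$ and the second-order cone program $$\text{(S)}\qquad \max_{\mathbf{b}\ge\mathbf{0}}\ \mathbf{b}^\top\tilde{\mathbf{x}}-\lambda\|\hat{\mathbf{b}}-\mathbf{b}\|_1-\kappa\|\mathbf{U}\mathbf{b}\|_2\quad\text{s.t.}\quad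 \mathbf{b}^\top\mathbf{1}+\gamma\|\hat{\mathbf{b}}-\mathbf{b}\|_1\le1 .$$ Let $\mathbf{b}^*$ be an optimal solution of (S). Then $\big(\mathbf{1}^\top\mathbf{b}^*,\ \mathbf{b}^*/\mathbf{1}^\top\mathbf{b}^*\big)$ is an optimal solution of (R).
   Context: $\|\cdot\|_1,\|\cdot\|_2$ are the $\ell_1$ and Euclidean norms, $\mathbf{1}$ the all-ones vector, vector inequalities componentwise. $\tilde{\mathbf{x}}$ plays the role of a predicted price-relative vector, $\gamma$ a proportional transaction cost rate, $\lambda$ a rebalancing penalty and $\kappa$ the size of the uncertainty set. *)

theory Defs
  imports "HOL-Analysis.Analysis"
begin

definition l1norm :: "real ^ 'n \<Rightarrow> real" where
  "l1norm v = (\<Sum>i\<in>UNIV. \<bar>v $ i\<bar>)"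

definition nonneg_vec :: "real ^ 'n \<Rightarrow> bool" where
  "nonneg_vec v \<longleftrightarrow> (\<forall>i. 0 \<le> v $ i)"

definition vsum :: "real ^ 'n \<Rightarrow> real" where
  "vsum v = (\<Sum>i\<in>UNIV. v $ i)"

definition sym_pos_def :: "real ^ 'n ^ 'n \<Rightarrow> bool" where
  "sym_pos_def S \<longleftrightarrow> transpose S = S \<and> (\<forall>x. x \<noteq> 0 \<longrightarrow> x \<bullet> (S *v x) > 0)"

definition upper_triangular :: "real ^ ('k::{finite,linorder}) ^ ('k::{finite,linorder}) \<Rightarrow> bool" where
  "upper_triangular U \<longleftrightarrow> (\<forall>i j. j < i \<longrightarrow> U $ i $ j = 0)"

definition ellipsoid :: "real ^ 'n \<Rightarrow> real ^ 'n ^ 'n \<Rightarrow> real \<Rightarrow> (real ^ 'n) set" where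
  "ellipsoid xt S kap = {x. (x - xt) \<bullet> (matrix_inv S *v (x - xt)) \<le> kap\<^sup>2}"

definition R_feasible :: "real ^ 'n \<Rightarrow> real \<Rightarrow> real \<Rightarrow> real ^ 'n \<Rightarrow> bool" where
  "R_feasible bh gam w b \<longleftrightarrow> 0 \<le> w \<and> nonneg_vec b \<and>
     w + gam * l1norm (bh - w *\<^sub>R b) = 1 \<and> vsum b = 1"

definition R_obj :: "real ^ 'n \<Rightarrow> real ^ 'n ^ 'n \<Rightarrow> real \<Rightarrow> real ^ 'n \<Rightarrow> real \<Rightarrow> real \<Rightarrow> real ^ 'n \<Rightarrow> real" where
  "R_obj xt S kap bh lam w b =
     (INF x\<in>ellipsoid xt S kap. w * (b \<bullet> x)) - lam * l1norm (bh - w *\<^sub>R b)"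

definition R_optimal where
  "R_optimal xt S kap bh lam gam w b \<longleftrightarrow> R_feasible bh gam w b \<and>
     (\<forall>w' b'. R_feasible bh gam w' b' \<longrightarrow> R_obj xt S kap bh lam w' b' \<le> R_obj xt S kap bh lam w b)"

definition S_feasible :: "real ^ 'n \<Rightarrow> real \<Rightarrow> real ^ 'n \<Rightarrow> bool" where
  "S_feasible bh gam b \<longleftrightarrow> nonneg_vec b \<and> vsum b + gam * l1norm (bh - b) \<le> 1"

definition S_obj :: "real ^ 'n \<Rightarrow> real ^ 'n ^ 'n \<Rightarrow> real \<Rightarrow> real ^ 'n \<Rightarrow> real \<Rightarrow> real ^ 'n \<Rightarrow> real" where
  "S_obj xt U kap bh lam b = b \<bullet> xt - lam * l1norm (bh - b) - kap * norm (U *v b)"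

definition S_optimal where
  "S_optimal xt U kap bh lam gam b \<longleftrightarrow> S_feasible bh gam b \<and>
     (\<forall>b'. S_feasible bh gam b' \<longrightarrow> S_obj xt U kap bh lam b' \<le> S_obj xt U kap bh lam b)"

end

theory Submission
  imports Defs
begin

lemma minv_right:
  fixes A :: "real^'n^'n"
  assumes "invertible A"
  shows "A ** matrix_inv A = mat 1 \<and> matrix_inv A ** A = mat 1"
  using assms unfolding matrix_inv_def invertible_def by (rule someI_ex)

lemma quad_id:
  fixes U :: "real^'n^'n"
  shows "((transpose U ** U) *v z) \<bullet> w = (U *v z) \<bullet> (U *v w)"
proof -
  have "(transpose U ** U) *v z = transpose U *v (U *v z)"
    by (simp add: matrix_vector_mul_assoc)
  also have "transpose U *v (U *v z) = (U *v z) v* U"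
    using vector_transpose_matrix[of "U *v z" "transpose U"] by simp
  finally show ?thesis by (simp add: dot_lmul_matrix)
qed

lemma inf_formula:
  fixes U S :: "real^'n^'n" and xt b :: "real^'n"
  assumes SU: "S = transpose U ** U" and inv: "invertible S" and kap: "kap \<ge> 0" and w: "w \<ge> 0"
  shows "(INF x\<in>ellipsoid xt S kap. w * (b \<bullet> x)) = w * (b \<bullet> xt - kap * norm (U *v b))"
proof -
  let ?v = "w * (b \<bullet> xt - kap * norm (U *v b))"
  have mi: "matrix_inv S ** S = mat 1" "S ** matrix_inv S = mat 1" using minv_right[OF inv] by auto
  have lower: "?v \<le> w * (b \<bullet> x)" if xE: "x \<in> ellipsoid xt S kap" for x
  proof -
    define d where "d = x - xt"
    define z where "z = matrix_inv S *v d"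
    have Sz: "S *v z = d" unfolding z_def by (simp add: matrix_vector_mul_assoc mi)
    have "d \<bullet> z = (U *v z) \<bullet> (U *v z)" using quad_id[of U z z] Sz SU by simp
    hence "norm (U *v z) ^ 2 \<le> kap ^ 2" using xE unfolding ellipsoid_def d_def z_def
      by (simp add: power2_norm_eq_inner)
    hence nz: "norm (U *v z) \<le> kap" using kap by (meson norm_ge_zero power2_le_imp_le)
    have "b \<bullet> d = (U *v z) \<bullet> (U *v b)" using quad_id[of U z b] Sz SU by (simp add: inner_commute)
    moreover have "\<bar>(U *v z) \<bullet> (U *v b)\<bar> \<le> norm (U *v z) * norm (U *v b)" by (rule Cauchy_Schwarz_ineq2)
    moreover have "norm (U *v z) * norm (U *v b) \<le> kap * norm (U *v b)"
      using nz by (simp add: mult_right_mono)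
    ultimately have "b \<bullet> d \<ge> - kap * norm (U *v b)" by linarith
    hence "b \<bullet> xt - kap * norm (U *v b) \<le> b \<bullet> x" unfolding d_def by (simp add: inner_diff_right)
    thus ?thesis using w by (simp add: mult_left_mono)
  qed
  have attain: "\<exists>x\<in>ellipsoid xt S kap. w * (b \<bullet> x) = ?v"
  proof (cases "U *v b = 0")
    case True
    then show ?thesis by (intro bexI[of _ xt]) (auto simp: ellipsoid_def)
  next
    case False
    hence np: "norm (U *v b) > 0" by simp
    define z where "z = (- kap / norm (U *v b)) *\<^sub>R b"
    define d where "d = S *v z"
    have iz: "matrix_inv S *v d = z" unfolding d_def by (simp add: matrix_vector_mul_assoc mi)
    have Uz: "U *v z = (- kap / norm (U *v b)) *\<^sub>R (U *v b)"
      unfolding z_def by (rule matrix_vector_mult_scaleR)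
    have "d \<bullet> z = (U *v z) \<bullet> (U *v z)" using quad_id[of U z z] SU d_def by simp
    also have "\<dots> = kap ^ 2" using np unfolding Uz
      by (simp add: power2_norm_eq_inner[symmetric] power2_eq_square field_simps)
    finally have q: "d \<bullet> z = kap ^ 2" .
    have "b \<bullet> d = (U *v z) \<bullet> (U *v b)" using quad_id[of U z b] SU d_def by (simp add: inner_commute)
    also have "\<dots> = - kap * norm (U *v b)" using np unfolding Uz
      by (simp add: power2_norm_eq_inner[symmetric] power2_eq_square field_simps)
    finally have bd: "b \<bullet> d = - kap * norm (U *v b)" .
    show ?thesis
      by (intro bexI[of _ "xt + d"]) (auto simp: ellipsoid_def iz q inner_add_right bd algebra_simps)
  qed
  show ?thesis
  proof (rule cInf_eq_minimum)
    show "?v \<in> (\<lambda>x. w * (b \<bullet> x)) ` ellipsoid xt S kap" using attain by (metis image_eqI)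
  next
    fix y assume "y \<in> (\<lambda>x. w * (b \<bullet> x)) ` ellipsoid xt S kap"
    then show "?v \<le> y" using lower by auto
  qed
qed


lemma l1_triangle: "l1norm (x + y) \<le> l1norm x + l1norm (y :: real^'n)"
  unfolding l1norm_def by (simp add: sum.distrib[symmetric] sum_mono abs_triangle_ineq)

lemma l1_axis: "l1norm (axis i (t::real)) = \<bar>t\<bar>"
proof -
  have "(\<Sum>j\<in>UNIV. \<bar>axis i t $ j\<bar>) = (\<Sum>j\<in>UNIV. if j = i then \<bar>t\<bar> else 0)"
    by (rule sum.cong) (auto simp: axis_def)
  thus ?thesis unfolding l1norm_def by simp
qed

lemma diag_eq:
  fixes U :: "real^'n^'n"
  shows "(transpose U ** U) $ i $ i = norm (U *v axis i 1) ^ 2"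
proof -
  have "norm (U *v axis i 1) ^ 2 = ((transpose U ** U) *v axis i 1) \<bullet> axis i 1"
    by (simp add: quad_id power2_norm_eq_inner)
  also have "\<dots> = (transpose U ** U) $ i $ i"
    by (simp add: inner_axis matrix_vector_mult_basis column_def)
  finally show ?thesis by simp
qed

theorem theorem2:
  fixes xt bh bs :: "real ^ 'n::{finite,linorder}"
    and S U :: "real ^ ('n::{finite,linorder}) ^ ('n::{finite,linorder})"
    and lam gam kap :: real
  assumes bh_simplex: "nonneg_vec bh" "vsum bh = 1"
    and lam_pos: "lam > 0"
    and gam_rng: "0 \<le> gam" "gam < 1"
    and kap_nn: "kap \<ge> 0"
    and S_pd: "sym_pos_def S"
    and chol: "S = transpose U ** U" "upper_triangular U"
    and big: "Max ((\<lambda>i. xt $ i) ` UNIV) > kap * sqrt (\<Sum>i\<in>UNIV. S $ i $ i) + lam"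
    and opt: "S_optimal xt U kap bh lam gam bs"
  shows "R_optimal xt S kap bh lam gam (vsum bs) ((1 / vsum bs) *\<^sub>R bs)"
proof -
  have inv: "invertible S"
    unfolding invertible_left_inverse matrix_left_invertible_ker
  proof (intro allI impI)
    fix x assume "S *v x = 0"
    thus "x = 0" using S_pd unfolding sym_pos_def_def by force
  qed
  have Robj: "R_obj xt S kap bh lam w b = S_obj xt U kap bh lam (w *\<^sub>R b)" if "w \<ge> 0" for w b
    unfolding R_obj_def S_obj_def inf_formula[OF chol(1) inv kap_nn that]
    using that by (simp add: matrix_vector_mult_scaleR algebra_simps)
  have vsum_scale: "vsum (c *\<^sub>R v) = c * vsum v" for c v
    unfolding vsum_def by (simp add: sum_distrib_left)
  have Sfeas: "S_feasible bh gam (w *\<^sub>R b)" if "R_feasible bh gam w b" for w b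
    using that unfolding R_feasible_def S_feasible_def nonneg_vec_def
    by (auto simp: vsum_scale)
  have bsf: "S_feasible bh gam bs" and bsopt: "\<And>b'. S_feasible bh gam b' \<Longrightarrow>
      S_obj xt U kap bh lam b' \<le> S_obj xt U kap bh lam bs"
    using opt unfolding S_optimal_def by auto
  have bsnn: "\<And>i. 0 \<le> bs $ i" using bsf unfolding S_feasible_def nonneg_vec_def by auto
  have tight: "vsum bs + gam * l1norm (bh - bs) = 1"
  proof (rule ccontr)
    assume "vsum bs + gam * l1norm (bh - bs) \<noteq> 1"
    hence sp: "vsum bs + gam * l1norm (bh - bs) < 1" using bsf unfolding S_feasible_def by auto
    define s where "s = 1 - (vsum bs + gam * l1norm (bh - bs))"
    define t where "t = s / 2"
    have tp: "t > 0" using sp unfolding s_def t_def by simp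
    obtain i where xi: "xt $ i = Max ((\<lambda>i. xt $ i) ` UNIV)"
    proof -
      have "Max ((\<lambda>i. xt $ i) ` UNIV) \<in> (\<lambda>i. xt $ i) ` UNIV" by (rule Max_in) auto
      thus ?thesis using that by (metis imageE)
    qed
    define e where "e = axis i (1::real)"
    define b' where "b' = bs + t *\<^sub>R e"
    have vb': "vsum b' = vsum bs + t"
      unfolding b'_def e_def vsum_def by (simp add: sum.distrib sum_distrib_left[symmetric] axis_def)
    have l1a: "l1norm (bh - b') \<le> l1norm (bh - bs) + t"
    proof -
      have "l1norm (bh - b') \<le> l1norm (bh - bs) + l1norm (- (t *\<^sub>R e))"
        using l1_triangle[of "bh - bs" "- (t *\<^sub>R e)"] unfolding b'_def by (simp add: algebra_simps)
      moreover have "l1norm (- (t *\<^sub>R e)) = t" proof -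
        have "- (t *\<^sub>R e) = axis i (-t)" by (simp add: e_def vec_eq_iff axis_def)
        thus ?thesis using l1_axis[of i "-t"] tp by simp
      qed
      ultimately show ?thesis by simp
    qed
    have l1b: "l1norm (bh - bs) \<le> l1norm (bh - b') + t"
    proof -
      have "l1norm (bh - bs) \<le> l1norm (bh - b') + l1norm (t *\<^sub>R e)"
        using l1_triangle[of "bh - b'" "t *\<^sub>R e"] unfolding b'_def by (simp add: algebra_simps)
      moreover have "l1norm (t *\<^sub>R e) = t" proof -
        have "t *\<^sub>R e = axis i t" by (simp add: e_def vec_eq_iff axis_def)
        thus ?thesis using l1_axis[of i "t"] tp by simp
      qed
      ultimately show ?thesis by simp
    qed
    have b'f: "S_feasible bh gam b'"
      unfolding S_feasible_def
    proof
      show "nonneg_vec b'" unfolding nonneg_vec_def b'_def e_def using bsnn tp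
        by (auto simp: axis_def)
      have "gam * l1norm (bh - b') \<le> gam * (l1norm (bh - bs) + t)"
        using l1a gam_rng by (simp add: mult_left_mono)
      moreover have "gam * t \<le> t" using tp gam_rng by simp
      moreover have "gam * (l1norm (bh - bs) + t) = gam * l1norm (bh - bs) + gam * t"
        by (simp add: distrib_left)
      ultimately show "vsum b' + gam * l1norm (bh - b') \<le> 1"
        unfolding vb' using s_def t_def by linarith
    qed
    define sig where "sig = sqrt (\<Sum>i\<in>UNIV. S $ i $ i)"
    have diag_nn: "\<And>j. 0 \<le> S $ j $ j" unfolding chol(1) diag_eq by simp
    have ne: "norm (U *v e) \<le> sig"
    proof -
      have "norm (U *v e) = sqrt (S $ i $ i)" unfolding e_def chol(1) diag_eq by simp
      also have "\<dots> \<le> sig" unfolding sig_def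
        by (intro real_sqrt_le_mono member_le_sum) (auto simp: diag_nn)
      finally show ?thesis .
    qed
    have nb': "norm (U *v b') \<le> norm (U *v bs) + t * sig"
    proof -
      have "norm (U *v b') \<le> norm (U *v bs) + norm (U *v (t *\<^sub>R e))"
        unfolding b'_def by (simp add: matrix_vector_right_distrib norm_triangle_ineq)
      also have "norm (U *v (t *\<^sub>R e)) = t * norm (U *v e)"
        using tp by (simp add: matrix_vector_mult_scaleR)
      also have "\<dots> \<le> t * sig" using ne tp by simp
      finally show ?thesis by simp
    qed
    have ip: "b' \<bullet> xt = bs \<bullet> xt + t * xt $ i"
      unfolding b'_def e_def by (simp add: inner_add_left inner_axis' )
    have gain: "xt $ i - lam - kap * sig > 0" using big xi unfolding sig_def by simp
    have "S_obj xt U kap bh lam b' \<ge> S_obj xt U kap bh lam bs + t * (xt $ i - lam - kap * sig)"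
    proof -
      have "lam * l1norm (bh - b') \<le> lam * l1norm (bh - bs) + lam * t"
        using l1a lam_pos by (simp add: distrib_left[symmetric] mult_left_mono)
      moreover have "kap * norm (U *v b') \<le> kap * norm (U *v bs) + kap * (t * sig)"
        using nb' kap_nn by (simp add: distrib_left[symmetric] mult_left_mono)
      ultimately show ?thesis unfolding S_obj_def ip by (simp add: algebra_simps)
    qed
    moreover have "t * (xt $ i - lam - kap * sig) > 0" using tp gain by simp
    ultimately have "S_obj xt U kap bh lam b' > S_obj xt U kap bh lam bs" by linarith
    thus False using bsopt[OF b'f] by linarith
  qed
  have vpos: "vsum bs > 0"
  proof (rule ccontr)
    assume "\<not> vsum bs > 0"
    moreover have "vsum bs \<ge> 0" unfolding vsum_def using bsnn by (simp add: sum_nonneg)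
    ultimately have "vsum bs = 0" by simp
    hence "\<forall>i. bs $ i = 0" unfolding vsum_def using bsnn
      by (simp add: sum_nonneg_eq_0_iff)
    hence "bs = 0" by (simp add: vec_eq_iff)
    moreover have "l1norm bh = 1" using bh_simplex
      unfolding l1norm_def vsum_def nonneg_vec_def by simp
    ultimately show False using tight \<open>vsum bs = 0\<close> gam_rng by simp
  qed
  have wb: "vsum bs *\<^sub>R ((1 / vsum bs) *\<^sub>R bs) = bs" using vpos by simp
  have Rf: "R_feasible bh gam (vsum bs) ((1 / vsum bs) *\<^sub>R bs)"
    unfolding R_feasible_def
    using vpos bsnn tight wb by (auto simp: nonneg_vec_def vsum_scale)
  show ?thesis
    unfolding R_optimal_def
  proof (intro conjI allI impI Rf)
    fix w' b' assume f: "R_feasible bh gam w' b'"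
    hence "w' \<ge> 0" unfolding R_feasible_def by simp
    hence "R_obj xt S kap bh lam w' b' = S_obj xt U kap bh lam (w' *\<^sub>R b')" by (rule Robj)
    also have "\<dots> \<le> S_obj xt U kap bh lam bs" using bsopt[OF Sfeas[OF f]] .
    also have "\<dots> = R_obj xt S kap bh lam (vsum bs) ((1 / vsum bs) *\<^sub>R bs)"
      using Robj[of "vsum bs" "(1 / vsum bs) *\<^sub>R bs"] vpos wb by simp
    finally show "R_obj xt S kap bh lam w' b' \<le> R_obj xt S kap bh lam (vsum bs) ((1 / vsum bs) *\<^sub>R bs)" .
  qed
qed

end
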